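(* Let $(\lambda,\boldsymbol p)$ and $(\lambda',\boldsymbol p')$ be two distinct elements of $\nabla$ with $(\lambda',\boldsymbol p')\ge(\lambda,\boldsymbol p)$ componentwise (i.e. $\lambda'\ge\lambda$ and $p'_i\ge p_i$ for all $i$). If $k>m_+(\lambda',\boldsymbol p')$ and $\lambda'+p'_k>0$, then $f(k;\lambda',\boldsymbol p')>f(k;\lambda,\boldsymbol p)$.
   Context: $\nabla=\{(\lambda,\boldsymbol p):\lambda\ge0,\ 1\ge p_1\ge p_2\ge\dots\ge0,\ \sum_ip_i<\infty\}$. For $(\lambda,\boldsymbol p)\in\nabla$, $f(k;\lambda,\boldsymbol p)$ is the probability that $X+\sum_iB_i=k$ where $X\sim\mathrm{Poisson}(\lambda)$, $B_i\sim\mathrm{Bernoulli}(p_i)$ are independent, with $f(-1;\cdot)=0$. The leading mode $m_+(\lambda,\boldsymbol p)$ is the unique integer $k$ with $f(k-1;\lambda,\boldsymbol p)\le f(k;\lambda,\boldsymbol p)>f(k+1;\lambda,\boldsymbol p)$. $p'_k$ denotes the $k$-th component of $\boldsymbol p'$. *)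

theory Defs
  imports Complex_Main
begin

text \<open>Parameter space nabla. The sequence p is indexed from 0 here:
  p i stands for the paper's p_(i+1).\<close>
definition in_nabla :: "real \<Rightarrow> (nat \<Rightarrow> real) \<Rightarrow> bool" where
  "in_nabla lam p \<longleftrightarrow> lam \<ge> 0 \<and> p 0 \<le> 1 \<and> (\<forall>i. p (Suc i) \<le> p i)
     \<and> (\<forall>i. p i \<ge> 0) \<and> summable p"

text \<open>Law of X + B_0 + ... + B_(n-1), X ~ Poisson(lam), B_i ~ Bernoulli(p i), independent,
  computed by successive convolution.\<close>
fun fin_dist :: "real \<Rightarrow> (nat \<Rightarrow> real) \<Rightarrow> nat \<Rightarrow> nat \<Rightarrow> real" where
  "fin_dist lam p 0 k = exp (- lam) * lam ^ k / fact k"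
| "fin_dist lam p (Suc n) k =
     (1 - p n) * fin_dist lam p n k + (if k = 0 then 0 else p n * fin_dist lam p n (k - 1))"

text \<open>f(k; lam, p) = P(X + sum_i B_i = k), obtained as the limit of the finite partial sums
  (the infinite sum converges a.s. since sum p_i < infinity).\<close>
definition f :: "nat \<Rightarrow> real \<Rightarrow> (nat \<Rightarrow> real) \<Rightarrow> real" where
  "f k lam p = lim (\<lambda>n. fin_dist lam p n k)"

definition lead_mode :: "real \<Rightarrow> (nat \<Rightarrow> real) \<Rightarrow> nat" where
  "lead_mode lam p = (THE m. (if m = 0 then 0 else f (m - 1) lam p) \<le> f m lam p
                             \<and> f m lam p > f (Suc m) lam p)"

end

theory Submission
  imports Defs
begin

definition sh :: "(nat \<Rightarrow> real) \<Rightarrow> nat \<Rightarrow> real" where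
  "sh a k = (if k = 0 then 0 else a (k - 1))"
definition bern :: "real \<Rightarrow> (nat \<Rightarrow> real) \<Rightarrow> nat \<Rightarrow> real" where
  "bern q a k = (1 - q) * a k + q * sh a k"
definition poi :: "real \<Rightarrow> nat \<Rightarrow> real" where
  "poi l k = exp (- l) * l ^ k / fact k"
definition conv :: "(nat \<Rightarrow> real) \<Rightarrow> (nat \<Rightarrow> real) \<Rightarrow> nat \<Rightarrow> real" where
  "conv z a k = (\<Sum>i\<le>k. z i * a (k - i))"
definition good :: "(nat \<Rightarrow> real) \<Rightarrow> bool" where
  "good a \<longleftrightarrow> (\<forall>i. 0 \<le> a i) \<and> (\<forall>i. a i * a (Suc (Suc i)) \<le> (a (Suc i))^2) \<and>
     (\<forall>i j l. i \<le> j \<longrightarrow> j \<le> l \<longrightarrow> 0 < a i \<longrightarrow> 0 < a l \<longrightarrow> 0 < a j)"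

lemma fin_dist_0: "fin_dist lam p 0 = poi lam"
  by (simp add: fun_eq_iff poi_def)
lemma fin_dist_Suc: "fin_dist lam p (Suc n) = bern (p n) (fin_dist lam p n)"
  by (simp add: fun_eq_iff bern_def sh_def)

declare fin_dist.simps [simp del]

lemma fin_dist_cong: "(\<forall>x<n. p x = p' x) \<Longrightarrow> fin_dist lam p n = fin_dist lam p' n"
  by (induction n) (auto simp: fin_dist_Suc fin_dist_0)

lemma bern_comm: "bern q (bern r a) = bern r (bern q a)"
  by (auto simp: fun_eq_iff bern_def sh_def algebra_simps)

lemma bern_0: "bern 0 a = a"
  by (simp add: fun_eq_iff bern_def)

lemma fin_dist_upd: "j < n \<Longrightarrow> fin_dist lam (p(j:=q)) n = bern q (fin_dist lam (p(j:=0)) n)"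
proof (induction n)
  case 0 then show ?case by simp
next
  case (Suc n)
  show ?case
  proof (cases "j = n")
    case True
    have e1: "fin_dist lam (p(j:=q)) n = fin_dist lam p n"
      by (rule fin_dist_cong) (simp add: True)
    have e2: "fin_dist lam (p(j:=0)) n = fin_dist lam p n"
      by (rule fin_dist_cong) (simp add: True)
    have h1: "(p(j:=q)) n = q" "(p(j:=0)) n = 0" using True by auto
    show ?thesis unfolding fin_dist_Suc e1 e2 h1 bern_0 ..
  next
    case False
    then have "j < n" using Suc.prems by simp
    then show ?thesis using False Suc.IH by (simp add: fin_dist_Suc bern_comm)
  qed
qed

lemma sum_sh: "(\<Sum>k\<le>K. sh a k) = (\<Sum>k<K. a k)"
  by (induction K) (auto simp: sh_def)

lemma poi_nonneg: "0 \<le> l \<Longrightarrow> 0 \<le> poi l k"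
  by (simp add: poi_def)

lemma poi_sum_le: "0 \<le> l \<Longrightarrow> (\<Sum>k\<le>K. poi l k) \<le> 1"
proof -
  assume l: "0 \<le> l"
  have "(\<Sum>k\<le>K. l ^ k /\<^sub>R fact k) \<le> (\<Sum>k. l ^ k /\<^sub>R fact k)"
    by (rule sum_le_suminf) (use l summable_exp_generic[of l] in auto)
  also have "\<dots> = exp l" by (simp add: exp_def)
  finally have s: "(\<Sum>k\<le>K. l ^ k / fact k) \<le> exp l" by (simp add: divide_inverse mult.commute)
  have "(\<Sum>k\<le>K. poi l k) = exp (-l) * (\<Sum>k\<le>K. l ^ k / fact k)"
    by (simp add: poi_def sum_distrib_left)
  also have "\<dots> \<le> exp (-l) * exp l" using s by (intro mult_left_mono) auto
  also have "\<dots> = 1" by (simp add: exp_minus field_simps)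
  finally show ?thesis .
qed

definition pok :: "(nat \<Rightarrow> real) \<Rightarrow> bool" where
  "pok p \<longleftrightarrow> (\<forall>l. 0 \<le> p l \<and> p l \<le> 1)"

lemma fin_dist_basic:
  assumes "0 \<le> lam" "pok p"
  shows "(\<forall>k. 0 \<le> fin_dist lam p n k) \<and> (\<forall>K. (\<Sum>k\<le>K. fin_dist lam p n k) \<le> 1)"
proof (induction n)
  case 0 then show ?case using assms by (simp add: fin_dist_0 poi_nonneg poi_sum_le)
next
  case (Suc n)
  let ?F = "fin_dist lam p n"
  have q: "0 \<le> p n" "p n \<le> 1" using assms(2) by (auto simp: pok_def)
  have nn: "\<forall>k. 0 \<le> sh ?F k" using Suc by (simp add: sh_def)
  have a: "\<forall>k. 0 \<le> fin_dist lam p (Suc n) k"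
    using Suc q nn by (simp add: fin_dist_Suc bern_def)
  have b: "(\<Sum>k\<le>K. fin_dist lam p (Suc n) k) \<le> 1" for K
  proof -
    have "(\<Sum>k\<le>K. fin_dist lam p (Suc n) k) = (1 - p n) * (\<Sum>k\<le>K. ?F k) + p n * (\<Sum>k<K. ?F k)"
      unfolding fin_dist_Suc bern_def sum.distrib sum_distrib_left[symmetric] sum_sh ..
    also have "\<dots> \<le> (1 - p n) * 1 + p n * 1"
    proof (intro add_mono mult_left_mono)
      show "(\<Sum>k<K. ?F k) \<le> 1"
      proof -
        have "(\<Sum>k<K. ?F k) \<le> (\<Sum>k\<le>K. ?F k)"
          by (rule sum_mono2) (use Suc in auto)
        then show ?thesis using Suc by (meson order_trans)
      qed
    qed (use Suc q in auto)
    finally show ?thesis by simp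
  qed
  show ?case using a b by blast
qed

lemma fin_dist_nonneg: "0 \<le> lam \<Longrightarrow> pok p \<Longrightarrow> 0 \<le> fin_dist lam p n k"
  using fin_dist_basic by blast

lemma fin_dist_le1: "0 \<le> lam \<Longrightarrow> pok p \<Longrightarrow> fin_dist lam p n k \<le> 1"
proof -
  assume a: "0 \<le> lam" "pok p"
  have "fin_dist lam p n k \<le> (\<Sum>j\<le>k. fin_dist lam p n j)"
    by (rule member_le_sum) (use fin_dist_nonneg[OF a] in auto)
  also have "\<dots> \<le> 1" using fin_dist_basic[OF a] by blast
  finally show ?thesis .
qed

lemma key_ineq:
  fixes x y z w q :: real
  assumes "0 \<le> x" "0 \<le> y" "0 \<le> z" "0 \<le> w" "y * w \<le> z^2" "x * z \<le> y^2"
    "0 < x \<Longrightarrow> 0 < w \<Longrightarrow> 0 < y \<and> 0 < z" "0 \<le> q" "q \<le> 1"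
  shows "((1-q)*y + q*x) * ((1-q)*w + q*z) \<le> ((1-q)*z + q*y)^2"
proof -
  have yz: "x * w \<le> y * z"
  proof (cases "0 < y \<and> 0 < z")
    case True
    have "(x*w) * (y*z) = (x*z)*(y*w)" by (simp add: algebra_simps)
    also have "\<dots> \<le> y^2 * z^2" using assms by (intro mult_mono) auto
    also have "\<dots> = (y*z)*(y*z)" by (simp add: power2_eq_square algebra_simps)
    finally show ?thesis using True by (simp add: mult_le_cancel_right)
  next
    case False
    then have "x = 0 \<or> w = 0" using assms by force
    then show ?thesis using assms by auto
  qed
  have "((1-q)*z + q*y)^2 - ((1-q)*y + q*x) * ((1-q)*w + q*z)
      = (1-q)^2*(z^2-y*w) + q^2*(y^2-x*z) + q*(1-q)*(y*z-x*w)"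
    by (simp add: power2_eq_square algebra_simps)
  also have "\<dots> \<ge> 0" using assms yz by (intro add_nonneg_nonneg mult_nonneg_nonneg) auto
  finally show ?thesis by simp
qed

lemma good_bern:
  assumes g: "good a" and q: "0 \<le> q" "q \<le> 1"
  shows "good (bern q a)"
proof -
  have nn: "\<forall>i. 0 \<le> a i" and lc: "\<forall>i. a i * a (Suc (Suc i)) \<le> (a (Suc i))^2"
    and iv: "\<forall>i j l. i \<le> j \<longrightarrow> j \<le> l \<longrightarrow> 0 < a i \<longrightarrow> 0 < a l \<longrightarrow> 0 < a j"
    using g by (auto simp: good_def)
  have shnn: "0 \<le> sh a i" for i using nn by (simp add: sh_def)
  have p1: "\<forall>i. 0 \<le> bern q a i" using nn shnn q by (simp add: bern_def)
  have p2: "bern q a i * bern q a (Suc (Suc i)) \<le> (bern q a (Suc i))^2" for i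
  proof -
    let ?x = "sh a i" and ?y = "a i" and ?z = "a (Suc i)" and ?w = "a (Suc (Suc i))"
    have e: "bern q a i = (1-q)*?y + q*?x" "bern q a (Suc i) = (1-q)*?z + q*?y"
      "bern q a (Suc (Suc i)) = (1-q)*?w + q*?z" by (auto simp: bern_def sh_def)
    have c1: "?x * ?z \<le> ?y^2"
    proof (cases i)
      case 0 then show ?thesis by (simp add: sh_def)
    next
      case (Suc i') then show ?thesis using lc by (simp add: sh_def)
    qed
    have c2: "0 < ?x \<Longrightarrow> 0 < ?w \<Longrightarrow> 0 < ?y \<and> 0 < ?z"
    proof -
      assume h: "0 < ?x" "0 < ?w"
      then have i: "i \<noteq> 0" "0 < a (i - 1)" by (auto simp: sh_def split: if_splits)
      show ?thesis using iv i h(2)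
      proof -
        have "0 < a i" using iv[rule_format, of "i - 1" i "Suc (Suc i)"] i h(2) by simp
        moreover have "0 < a (Suc i)" using iv[rule_format, of "i - 1" "Suc i" "Suc (Suc i)"] i h(2) by simp
        ultimately show ?thesis by simp
      qed
    qed
    have n3: "0 \<le> ?y" "0 \<le> ?z" "0 \<le> ?w" using nn by blast+
    have lci: "?y * ?w \<le> ?z^2" using lc by blast
    show ?thesis unfolding e
      by (rule key_ineq[OF shnn[of i] n3 lci c1 c2 q])
  qed
  have pos: "0 < bern q a j \<longleftrightarrow> (q < 1 \<and> 0 < a j) \<or> (0 < q \<and> 0 < j \<and> 0 < a (j - 1))" for j
  proof -
    have "0 \<le> (1-q) * a j" "0 \<le> q * sh a j" using q nn shnn by auto
    then have "0 < bern q a j \<longleftrightarrow> 0 < (1-q) * a j \<or> 0 < q * sh a j"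
      by (auto simp: bern_def)
    also have "\<dots> \<longleftrightarrow> (q < 1 \<and> 0 < a j) \<or> (0 < q \<and> 0 < j \<and> 0 < a (j - 1))"
    proof -
      have e1: "0 < (1-q) * a j \<longleftrightarrow> q < 1 \<and> 0 < a j"
        using q nn[rule_format, of j] by (simp add: zero_less_mult_iff)
      have e2: "0 < sh a j \<longleftrightarrow> 0 < j \<and> 0 < a (j - 1)" by (simp add: sh_def)
      have e3: "0 < q * sh a j \<longleftrightarrow> 0 < q \<and> 0 < sh a j"
        using q shnn[of j] by (simp add: zero_less_mult_iff)
      show ?thesis using e1 e2 e3 by blast
    qed
    finally show ?thesis .
  qed
  have p3: "0 < bern q a j" if h: "i \<le> j" "j \<le> l" "0 < bern q a i" "0 < bern q a l" for i j l
  proof (cases "j = l")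
    case True then show ?thesis using h by simp
  next
    case False
    then have jl: "j < l" using h by simp
    obtain i0 where i0: "i0 \<le> i" "0 < a i0"
    proof (cases "0 < a i")
      case True then show ?thesis using that[of i] by simp
    next
      case False
      then have "0 < a (i - 1)" using h(3) pos[of i] by auto
      then show ?thesis using that[of "i - 1"] by simp
    qed
    obtain l0 where l0: "l0 \<le> l" "l \<le> Suc l0" "0 < a l0"
    proof (cases "0 < a l")
      case True then show ?thesis using that[of l] by simp
    next
      case False
      then have "0 < a (l - 1)" "0 < l" using h(4) pos[of l] by auto
      then show ?thesis using that[of "l - 1"] by simp
    qed
    have jl0: "j \<le> l0" using jl l0(2) by simp
    have "i0 \<le> j" using i0(1) h(1) by simp
    then have aj: "0 < a j" using iv[rule_format, of i0 j l0] i0(2) jl0 l0(3) by blast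
    show ?thesis
    proof (cases "q < 1")
      case True then show ?thesis using pos[of j] aj by simp
    next
      case False
      then have q1: "q = 1" using q by simp
      then have "0 < i" "0 < a (i - 1)" using pos[of i] h(3) by auto
      moreover have "0 < a (l - 1)" using pos[of l] h(4) q1 by auto
      moreover have "i - 1 \<le> j - 1" "j - 1 \<le> l - 1" using h(1) h(2) by auto
      ultimately have "0 < a (j - 1)" using iv[rule_format, of "i - 1" "j - 1" "l - 1"] by blast
      moreover have "0 < j" using \<open>0 < i\<close> h(1) by simp
      ultimately show ?thesis using pos[of j] q1 by simp
    qed
  qed
  show ?thesis unfolding good_def using p1 p2 p3 by blast
qed

lemma good_poi: assumes "0 \<le> l" shows "good (poi l)"
proof -
  have p1: "\<forall>i. 0 \<le> poi l i" using assms by (simp add: poi_nonneg)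
  have p2: "poi l i * poi l (Suc (Suc i)) \<le> (poi l (Suc i))^2" for i
  proof -
    have f1: "fact (Suc i) = real (Suc i) * fact i" by simp
    have f2: "fact (Suc (Suc i)) = real (Suc (Suc i)) * (real (Suc i) * fact i)" by simp
    have ll: "l ^ i * l ^ Suc (Suc i) = l ^ Suc i * l ^ Suc i"
      by (simp add: power_add[symmetric])
    have "poi l i * poi l (Suc (Suc i)) = (exp (-l))^2 * (l ^ Suc i * l ^ Suc i) / (fact i * fact (Suc (Suc i)))"
      unfolding ll[symmetric] by (simp add: poi_def power2_eq_square del: fact_Suc)
    also have "\<dots> \<le> (exp (-l))^2 * (l ^ Suc i * l ^ Suc i) / (fact (Suc i) * fact (Suc i))"
    proof (rule divide_left_mono)
      show "fact (Suc i) * fact (Suc i) \<le> (fact i * fact (Suc (Suc i)) :: real)"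
        unfolding f1 f2 by (simp add: mult_right_mono algebra_simps)
      show "0 < (fact i * fact (Suc (Suc i)) :: real) * (fact (Suc i) * fact (Suc i))"
        by (simp del: fact_Suc)
    qed (use assms in simp)
    also have "\<dots> = (poi l (Suc i))^2"
      by (simp add: poi_def power2_eq_square del: fact_Suc)
    finally show ?thesis .
  qed
  have p3: "0 < poi l j" if h: "i \<le> j" "j \<le> ll" "0 < poi l i" "0 < poi l ll" for i j ll
  proof (cases "l = 0")
    case True
    then have "ll = 0" using h(4) by (cases ll) (auto simp: poi_def)
    then show ?thesis using h True by (simp add: poi_def)
  next
    case False then show ?thesis using assms by (simp add: poi_def)
  qed
  show ?thesis unfolding good_def using p1 p2 p3 by blast
qed

lemma good_fin_dist: "0 \<le> lam \<Longrightarrow> pok p \<Longrightarrow> good (fin_dist lam p n)"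
  by (induction n) (auto simp: fin_dist_0 fin_dist_Suc good_poi pok_def intro!: good_bern)

lemma good_nd:
  assumes g: "good a" and h: "sh a k \<le> a k" "0 < a k" and j: "j \<le> k"
  shows "sh a j \<le> a j"
proof -
  have nn: "\<forall>i. 0 \<le> a i" and lc: "\<forall>i. a i * a (Suc (Suc i)) \<le> (a (Suc i))^2"
    and iv: "\<forall>i j l. i \<le> j \<longrightarrow> j \<le> l \<longrightarrow> 0 < a i \<longrightarrow> 0 < a l \<longrightarrow> 0 < a j"
    using g by (auto simp: good_def)
  have "sh a j \<le> a j \<and> (0 < a j \<or> (\<forall>i\<le>j. a i = 0))"
  using j proof (induction j rule: inc_induct)
    case base then show ?case using h by simp
  next
    case (step n)
    have shs: "sh a (Suc n) = a n" by (simp add: sh_def)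
    show ?case
    proof (cases "\<forall>i\<le>Suc n. a i = 0")
      case True
      then have "a n = 0" by simp
      moreover have "sh a n = 0" using True by (simp add: sh_def)
      ultimately show ?thesis using True by simp
    next
      case False
      then have pos: "0 < a (Suc n)" using step.IH by auto
      have le: "a n \<le> a (Suc n)" using step.IH shs by simp
      show ?thesis
      proof (cases "0 < a n")
        case True
        have "sh a n \<le> a n"
        proof (cases n)
          case 0 then show ?thesis using nn by (simp add: sh_def)
        next
          case (Suc n')
          have "a n' * a (Suc n) \<le> (a n)^2" using lc Suc by simp
          also have "\<dots> \<le> a n * a (Suc n)" using le True by (simp add: power2_eq_square)
          finally have "a n' \<le> a n" using pos by (simp add: mult_le_cancel_right)
          then show ?thesis using Suc by (simp add: sh_def)
        qed
        then show ?thesis using True by simp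
      next
        case False
        then have an: "a n = 0" using nn[rule_format, of n] by linarith
        have z: "\<forall>i\<le>n. a i = 0"
        proof (intro allI impI)
          fix i assume "i \<le> n"
          show "a i = 0"
          proof (rule ccontr)
            assume "a i \<noteq> 0"
            then have "0 < a i" using nn[rule_format, of i] by linarith
            then have "0 < a n" using iv[rule_format, of i n "Suc n"] \<open>i \<le> n\<close> pos by simp
            then show False using an by simp
          qed
        qed
        then have "sh a n \<le> a n" by (auto simp: sh_def)
        then show ?thesis using z by simp
      qed
    qed
  qed
  then show ?thesis by simp
qed

lemma good_decr:
  assumes g: "good a" and h: "a (Suc m) < a m" and pos: "\<forall>j. m \<le> j \<longrightarrow> j \<le> k \<longrightarrow> 0 < a j"
  shows "m \<le> j \<Longrightarrow> Suc j \<le> k \<Longrightarrow> a (Suc j) < a j"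
proof (induction j)
  case 0 then show ?case using h by simp
next
  case (Suc j)
  show ?case
  proof (cases "m = Suc j")
    case True then show ?thesis using h by simp
  next
    case False
    then have mj: "m \<le> j" using Suc.prems by simp
    then have ih: "a (Suc j) < a j" using Suc by simp
    have lc: "a j * a (Suc (Suc j)) \<le> (a (Suc j))^2" using g by (simp add: good_def)
    have p1: "0 < a (Suc j)" and p0: "0 < a j" using pos mj Suc.prems by auto
    have "(a (Suc j))^2 < a j * a (Suc j)"
      using mult_strict_right_mono[OF ih p1] by (simp add: power2_eq_square)
    then have "a j * a (Suc (Suc j)) < a j * a (Suc j)" using lc by linarith
    then show ?thesis using p0 by simp
  qed
qed

definition II :: "nat \<Rightarrow> (nat \<Rightarrow> real) \<Rightarrow> bool" where
  "II k0 a \<longleftrightarrow> a (Suc k0) \<le> a k0 \<and> (0 < a k0 \<or> (\<forall>l\<ge>k0. a l = 0))"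

lemma II_bern_to_G:
  assumes g: "good G" and q: "0 \<le> q" "q \<le> 1" and I: "II k0 (bern q G)"
  shows "II k0 G"
proof (rule ccontr)
  assume nI: "\<not> II k0 G"
  have nn: "\<forall>i. 0 \<le> G i" and lc: "\<forall>i. G i * G (Suc (Suc i)) \<le> (G (Suc i))^2"
    and iv: "\<forall>i j l. i \<le> j \<longrightarrow> j \<le> l \<longrightarrow> 0 < G i \<longrightarrow> 0 < G l \<longrightarrow> 0 < G j"
    using g by (auto simp: good_def)
  have shnn: "0 \<le> sh G i" for i using nn by (simp add: sh_def)
  have b1: "bern q G (Suc k0) = (1-q) * G (Suc k0) + q * G k0" by (simp add: bern_def sh_def)
  have b0: "bern q G k0 = (1-q) * G k0 + q * sh G k0" by (simp add: bern_def)
  show False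
  proof (cases "G k0 < G (Suc k0)")
    case True
    have "sh G (Suc k0) \<le> G (Suc k0)" using True by (simp add: sh_def)
    moreover have "0 < G (Suc k0)" using True nn[rule_format, of k0] by linarith
    ultimately have x: "sh G k0 \<le> G k0" using good_nd[OF g, of "Suc k0" k0] by simp
    have "bern q G (Suc k0) \<le> bern q G k0" using I by (simp add: II_def)
    then have "(1-q) * (G (Suc k0) - G k0) + q * (G k0 - sh G k0) \<le> 0"
      unfolding b1 b0 by (simp add: algebra_simps)
    moreover have "0 \<le> q * (G k0 - sh G k0)" using q x by simp
    ultimately have "(1-q) * (G (Suc k0) - G k0) \<le> 0" by linarith
    have "\<not> q < 1"
    proof
      assume "q < 1"
      then have "0 < (1-q) * (G (Suc k0) - G k0)" using True by (intro mult_pos_pos) auto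
      then show False using \<open>(1-q) * (G (Suc k0) - G k0) \<le> 0\<close> by linarith
    qed
    then have q1: "q = 1" using q by simp
    have bs: "bern q G l = sh G l" for l using q1 by (simp add: bern_def)
    have "\<not> (\<forall>l\<ge>k0. bern q G l = 0)"
    proof
      assume "\<forall>l\<ge>k0. bern q G l = 0"
      then have "bern q G (Suc (Suc k0)) = 0" by simp
      moreover have "bern q G (Suc (Suc k0)) = G (Suc k0)" using bs by (simp add: sh_def)
      moreover have "0 < G (Suc k0)" using True nn[rule_format, of k0] by linarith
      ultimately show False by simp
    qed
    then have "0 < bern q G k0" using I unfolding II_def by blast
    then have xs: "0 < sh G k0" using bs by simp
    then obtain k1 where k1: "k0 = Suc k1" by (cases k0) (auto simp: sh_def)
    have e: "G k0 \<le> G k1" using I bs k1 by (simp add: II_def sh_def)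
    have e2: "G k1 \<le> G k0" using x k1 by (simp add: sh_def)
    have pk1: "0 < G k1" using xs k1 by (simp add: sh_def)
    have "G k1 * G (Suc k0) \<le> (G k0)^2" using lc k1 by simp
    also have "\<dots> = G k1 * G k0" using e e2 by (simp add: power2_eq_square)
    finally have "G (Suc k0) \<le> G k0" using pk1 by simp
    then show False using True by simp
  next
    case False
    then have "\<not> (0 < G k0 \<or> (\<forall>l\<ge>k0. G l = 0))" using nI by (simp add: II_def)
    then have nk: "\<not> 0 < G k0" and ex: "\<exists>l\<ge>k0. G l \<noteq> 0" by auto
    then obtain l where l: "l \<ge> k0" "G l \<noteq> 0" by blast
    have gk0: "G k0 = 0" using nk nn[rule_format, of k0] by linarith
    have gl: "0 < G l" using l(2) nn[rule_format, of l] by linarith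
    have gs: "G (Suc k0) = 0" using False gk0 nn[rule_format, of "Suc k0"] by linarith
    have z: "G i = 0" if "i \<le> Suc k0" for i
    proof (rule ccontr)
      assume "G i \<noteq> 0"
      then have "0 < G i" using nn[rule_format, of i] by linarith
      moreover have "Suc k0 \<le> l" using l gk0 by (cases "l = k0") auto
      ultimately have "0 < G (Suc k0)" using iv[rule_format, of i "Suc k0" l] that gl by blast
      then show False using gs by simp
    qed
    have shz: "sh G k0 = 0" using z by (simp add: sh_def)
    have "bern q G k0 = 0" using b0 gk0 shz by simp
    then have tz: "\<forall>l\<ge>k0. bern q G l = 0" using I by (simp add: II_def)
    show False
    proof (cases "q < 1")
      case True
      have "0 < (1-q) * G l" using True gl by simp
      moreover have "bern q G l \<ge> (1-q) * G l" using q shnn by (simp add: bern_def)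
      moreover have "bern q G l = 0" using tz l(1) by simp
      ultimately show False by linarith
    next
      case False
      then have "q = 1" using q by simp
      then have "bern q G (Suc l) = G l" by (simp add: bern_def sh_def)
      moreover have "bern q G (Suc l) = 0" using tz l(1) by simp
      ultimately show False using gl by simp
    qed
  qed
qed

lemma II_bern_down:
  assumes g: "good G" and q: "0 \<le> q'" "q' \<le> q" "q \<le> 1" and I: "II k0 (bern q G)"
  shows "II k0 (bern q' G)"
proof -
  have IG: "II k0 G" using II_bern_to_G[OF g _ _ I] q by simp
  have nn: "\<forall>i. 0 \<le> G i" using g by (auto simp: good_def)
  have shnn: "0 \<le> sh G i" for i using nn by (simp add: sh_def)
  have b1: "bern r G (Suc k0) = (1-r) * G (Suc k0) + r * G k0" for r by (simp add: bern_def sh_def)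
  have b0: "bern r G k0 = (1-r) * G k0 + r * sh G k0" for r by (simp add: bern_def)
  let ?z = "G (Suc k0)" and ?y = "G k0" and ?x = "sh G k0"
  have f0: "?z - ?y \<le> 0" using IG by (simp add: II_def)
  have fq: "(1-q) * ?z + q * ?y - ((1-q) * ?y + q * ?x) \<le> 0" using I b1 b0 by (simp add: II_def)
  have part1: "bern q' G (Suc k0) \<le> bern q' G k0"
  proof (cases "q = 0")
    case True
    then have "q' = 0" using q by simp
    then show ?thesis using f0 b1 b0 by simp
  next
    case False
    then have qp: "0 < q" using q by simp
    have "q * ((1-q') * ?z + q' * ?y - ((1-q') * ?y + q' * ?x))
        = (q - q') * (?z - ?y) + q' * ((1-q) * ?z + q * ?y - ((1-q) * ?y + q * ?x))"
      by (simp add: algebra_simps)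
    also have "\<dots> \<le> 0"
    proof (rule add_nonpos_nonpos)
      show "(q - q') * (?z - ?y) \<le> 0" using f0 q by (intro mult_nonneg_nonpos) auto
      show "q' * ((1-q) * ?z + q * ?y - ((1-q) * ?y + q * ?x)) \<le> 0"
        using fq q by (intro mult_nonneg_nonpos) auto
    qed
    finally have qX: "q * ((1-q') * ?z + q' * ?y - ((1-q') * ?y + q' * ?x)) \<le> 0" .
    have "(1-q') * ?z + q' * ?y - ((1-q') * ?y + q' * ?x) \<le> 0"
    proof (rule ccontr)
      assume "\<not> ?thesis"
      then have "0 < q * ((1-q') * ?z + q' * ?y - ((1-q') * ?y + q' * ?x))"
        using qp by (intro mult_pos_pos) auto
      then show False using qX by linarith
    qed
    then show ?thesis using b1 b0 by simp
  qed
  have part2: "0 < bern q' G k0 \<or> (\<forall>l\<ge>k0. bern q' G l = 0)"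
  proof (cases "q' = 1")
    case True
    then have "q = 1" using q by simp
    then show ?thesis using I True by (simp add: II_def)
  next
    case False
    then have q'1: "q' < 1" using q by simp
    show ?thesis
    proof (cases "0 < ?y")
      case True
      have "0 < (1-q') * ?y" using True q'1 by simp
      moreover have "0 \<le> q' * ?x" using shnn q by simp
      ultimately have "0 < bern q' G k0" using b0[of q'] by linarith
      then show ?thesis by simp
    next
      case False
      then have tz: "\<forall>l\<ge>k0. G l = 0" using IG by (simp add: II_def)
      have hi: "bern q' G l = 0" if "l > k0" for l
        using tz that by (auto simp: bern_def sh_def)
      show ?thesis
      proof (cases "0 < bern q' G k0")
        case True then show ?thesis by simp
      next
        case False
        have "0 \<le> bern q' G k0" using b0 tz shnn q q'1 by simp
        then have "bern q' G k0 = 0" using False by simp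
        show ?thesis
        proof (rule disjI2, intro allI impI)
          fix l assume "k0 \<le> l"
          then show "bern q' G l = 0" using hi \<open>bern q' G k0 = 0\<close> by (cases "l = k0") auto
        qed
      qed
    qed
  qed
  show ?thesis using part1 part2 by (simp add: II_def)
qed

lemma conv_sh: "conv z (sh A) k = sh (conv z A) k"
proof (cases k)
  case 0 then show ?thesis by (simp add: conv_def sh_def)
next
  case (Suc k')
  have "conv z (sh A) (Suc k') = (\<Sum>i\<le>k'. z i * sh A (Suc k' - i)) + z (Suc k') * sh A 0"
    by (simp add: conv_def)
  also have "\<dots> = (\<Sum>i\<le>k'. z i * A (k' - i))"
    by (auto simp: sh_def Suc_diff_le intro!: sum.cong)
  also have "\<dots> = sh (conv z A) (Suc k')" by (simp add: sh_def conv_def)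
  finally show ?thesis using Suc by simp
qed

lemma conv_lin: "conv z (\<lambda>j. c * A j + d * B j) k = c * conv z A k + d * conv z B k"
  by (simp add: conv_def sum.distrib sum_distrib_left algebra_simps)

lemma conv_diff: "conv z (\<lambda>j. A j - B j) k = conv z A k - conv z B k"
  by (simp add: conv_def sum_subtractf algebra_simps)

lemma conv_bern: "conv z (bern q A) k = bern q (conv z A) k"
proof -
  have "conv z (bern q A) k = (1-q) * conv z A k + q * conv z (sh A) k"
    unfolding bern_def by (rule conv_lin)
  then show ?thesis by (simp add: conv_sh bern_def)
qed

lemma conv_ge:
  assumes "\<forall>i. 0 \<le> z i" "\<forall>j\<le>k. 0 \<le> B j"
  shows "z 0 * B k \<le> conv z B k"
proof -
  have "z 0 * B (k - 0) \<le> (\<Sum>i\<le>k. z i * B (k - i))"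
    by (rule member_le_sum) (use assms in auto)
  then show ?thesis by (simp add: conv_def)
qed

lemma poi_conv: "poi (a + b) k = conv (poi b) (poi a) k"
proof -
  have t: "poi b i * poi a (k - i) = exp (-(a+b)) / fact k * (of_nat (k choose i) * b ^ i * a ^ (k - i))"
    if "i \<le> k" for i
  proof -
    have "of_nat (k choose i) = (fact k / (fact i * fact (k - i)) :: real)"
      using binomial_fact[OF that] by simp
    moreover have "exp (-(a+b)) = exp (-b) * exp (-a)" by (simp add: exp_add[symmetric])
    ultimately show ?thesis by (simp add: poi_def)
  qed
  have "conv (poi b) (poi a) k = (\<Sum>i\<le>k. exp (-(a+b)) / fact k * (of_nat (k choose i) * b ^ i * a ^ (k - i)))"
    unfolding conv_def by (rule sum.cong) (auto simp: t)
  also have "\<dots> = exp (-(a+b)) / fact k * (b + a) ^ k"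
    by (simp add: binomial_ring sum_distrib_left)
  also have "\<dots> = poi (a + b) k" by (simp add: poi_def add.commute)
  finally show ?thesis by simp
qed

lemma fin_dist_poisson: "fin_dist (a + d) p n = conv (poi d) (fin_dist a p n)"
proof (induction n)
  case 0 then show ?case by (simp add: fin_dist_0 fun_eq_iff poi_conv)
next
  case (Suc n)
  show ?case by (simp add: fin_dist_Suc Suc fun_eq_iff conv_bern)
qed

lemma II_conv_down:
  assumes g: "good A" and d: "0 \<le> d" and I: "II k0 (conv (poi d) A)"
  shows "II k0 A"
proof (rule ccontr)
  assume nI: "\<not> II k0 A"
  let ?z = "poi d"
  let ?C = "conv ?z A"
  have nn: "\<forall>i. 0 \<le> A i" and iv: "\<forall>i j l. i \<le> j \<longrightarrow> j \<le> l \<longrightarrow> 0 < A i \<longrightarrow> 0 < A l \<longrightarrow> 0 < A j"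
    using g by (auto simp: good_def)
  have zn: "\<forall>i. 0 \<le> ?z i" using d by (simp add: poi_nonneg)
  have z0: "0 < ?z 0" by (simp add: poi_def)
  have Ck0: "?C k0 = conv ?z (sh A) (Suc k0)" by (simp add: conv_sh sh_def)
  show False
  proof (cases "A k0 < A (Suc k0)")
    case True
    have pos: "0 < A (Suc k0)" using True nn[rule_format, of k0] by linarith
    have shs: "sh A (Suc k0) \<le> A (Suc k0)" using True by (simp add: sh_def)
    have nd: "\<forall>j\<le>Suc k0. 0 \<le> A j - sh A j"
      using good_nd[OF g shs pos] by simp
    have "?z 0 * (A (Suc k0) - sh A (Suc k0)) \<le> conv ?z (\<lambda>j. A j - sh A j) (Suc k0)"
      by (rule conv_ge[OF zn nd])
    also have "\<dots> = ?C (Suc k0) - ?C k0" by (simp add: conv_diff Ck0)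
    finally have "?z 0 * (A (Suc k0) - A k0) \<le> ?C (Suc k0) - ?C k0" by (simp add: sh_def)
    moreover have "0 < ?z 0 * (A (Suc k0) - A k0)" using z0 True by simp
    moreover have "?C (Suc k0) \<le> ?C k0" using I by (simp add: II_def)
    ultimately show False by linarith
  next
    case False
    then have "\<not> (0 < A k0 \<or> (\<forall>l\<ge>k0. A l = 0))" using nI by (simp add: II_def)
    then have nk: "\<not> 0 < A k0" and ex: "\<exists>l\<ge>k0. A l \<noteq> 0" by auto
    then obtain l where l: "l \<ge> k0" "A l \<noteq> 0" by blast
    have gk0: "A k0 = 0" using nk nn[rule_format, of k0] by linarith
    have gl: "0 < A l" using l(2) nn[rule_format, of l] by linarith
    have gs: "A (Suc k0) = 0" using False gk0 nn[rule_format, of "Suc k0"] by linarith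
    have z: "A i = 0" if "i \<le> Suc k0" for i
    proof (rule ccontr)
      assume "A i \<noteq> 0"
      then have "0 < A i" using nn[rule_format, of i] by linarith
      moreover have "Suc k0 \<le> l" using l gk0 by (cases "l = k0") auto
      ultimately have "0 < A (Suc k0)" using iv[rule_format, of i "Suc k0" l] that gl by blast
      then show False using gs by simp
    qed
    have "?C k0 = 0" unfolding conv_def by (rule sum.neutral) (auto simp: z)
    then have tz: "\<forall>l\<ge>k0. ?C l = 0" using I by (simp add: II_def)
    have "?z 0 * A l \<le> ?C l" by (rule conv_ge) (use zn nn in auto)
    moreover have "0 < ?z 0 * A l" using z0 gl by simp
    moreover have "?C l = 0" using tz l(1) by simp
    ultimately show False by linarith
  qed
qed

lemma II_mono:
  assumes l: "0 \<le> le" "le \<le> lb" and p: "\<forall>l. 0 \<le> pe l \<and> pe l \<le> pb l \<and> pb l \<le> 1"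
    and I: "II k0 (fin_dist lb pb n)"
  shows "II k0 (fin_dist le pe n)"
proof -
  define mix where "mix j = (\<lambda>x. if x < j then pe x else pb x)" for j
  have pm: "pok (mix j)" for j using p by (auto simp: mix_def pok_def intro: order_trans)
  have "j \<le> n \<Longrightarrow> II k0 (fin_dist lb (mix j) n)" for j
  proof (induction j)
    case 0
    have "mix 0 = pb" by (simp add: mix_def fun_eq_iff)
    then show ?case using I by simp
  next
    case (Suc j)
    let ?r = "mix j"
    have jn: "j < n" using Suc.prems by simp
    have e1: "?r(j := pb j) = ?r" by (simp add: mix_def fun_eq_iff)
    have e2: "?r(j := pe j) = mix (Suc j)" by (auto simp: mix_def fun_eq_iff)
    let ?G = "fin_dist lb (?r(j:=0)) n"
    have pk: "pok (?r(j:=0))" using pm[of j] by (simp add: pok_def)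
    have g: "good ?G" by (rule good_fin_dist) (use l pk in auto)
    have "II k0 (bern (pb j) ?G)"
      using Suc.IH jn fin_dist_upd[OF jn, of lb ?r "pb j"] e1 by simp
    then have "II k0 (bern (pe j) ?G)"
      by (rule II_bern_down[OF g, rotated -1]) (use p in auto)
    then show ?case using fin_dist_upd[OF jn, of lb ?r "pe j"] e2 by simp
  qed
  then have "II k0 (fin_dist lb (mix n) n)" by simp
  moreover have "fin_dist lb (mix n) n = fin_dist lb pe n"
    by (rule fin_dist_cong) (simp add: mix_def)
  moreover have "fin_dist lb pe n = conv (poi (lb - le)) (fin_dist le pe n)"
    using fin_dist_poisson[of le "lb - le" pe n] by simp
  moreover have "good (fin_dist le pe n)"
    by (rule good_fin_dist) (use l p in \<open>auto simp: pok_def intro: order_trans\<close>)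
  ultimately show ?thesis using II_conv_down[of "fin_dist le pe n" "lb - le" k0] l by simp
qed

lemma fin_mono:
  assumes l: "0 \<le> lam" "lam \<le> lb" and p: "\<forall>l. 0 \<le> p l \<and> p l \<le> q l \<and> q l \<le> pb l \<and> pb l \<le> 1"
    and I: "II k0 (fin_dist lb pb n)"
  shows "fin_dist lam p n (Suc k0) \<le> fin_dist lam q n (Suc k0)"
proof -
  define mix where "mix j = (\<lambda>x. if x < j then q x else p x)" for j
  have pm: "\<forall>x. 0 \<le> mix j x \<and> mix j x \<le> pb x \<and> pb x \<le> 1" for j
    using p by (auto simp: mix_def intro: order_trans)
  have "j \<le> n \<Longrightarrow> fin_dist lam p n (Suc k0) \<le> fin_dist lam (mix j) n (Suc k0)" for j
  proof (induction j)
    case 0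
    have "mix 0 = p" by (simp add: mix_def fun_eq_iff)
    then show ?case by simp
  next
    case (Suc j)
    let ?r = "mix j"
    have jn: "j < n" using Suc.prems by simp
    have e1: "?r(j := p j) = ?r" by (simp add: mix_def fun_eq_iff)
    have e2: "?r(j := q j) = mix (Suc j)" by (auto simp: mix_def fun_eq_iff)
    let ?G = "fin_dist lam (?r(j:=0)) n"
    have pe: "\<forall>x. 0 \<le> (?r(j:=0)) x \<and> (?r(j:=0)) x \<le> pb x \<and> pb x \<le> 1"
    proof
      fix x show "0 \<le> (?r(j:=0)) x \<and> (?r(j:=0)) x \<le> pb x \<and> pb x \<le> 1"
        using pm[of j] p[rule_format, of x] by auto
    qed
    have "II k0 ?G" by (rule II_mono[OF l pe I])
    then have GG: "?G (Suc k0) \<le> ?G k0" by (simp add: II_def)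
    have b: "bern r ?G (Suc k0) = ?G (Suc k0) + r * (?G k0 - ?G (Suc k0))" for r
      by (simp add: bern_def sh_def algebra_simps)
    have "fin_dist lam ?r n (Suc k0) = bern (p j) ?G (Suc k0)"
      using fin_dist_upd[OF jn, of lam ?r "p j"] e1 by simp
    also have "\<dots> \<le> bern (q j) ?G (Suc k0)"
      unfolding b using GG p by (intro add_left_mono mult_right_mono) auto
    also have "\<dots> = fin_dist lam (mix (Suc j)) n (Suc k0)"
      using fin_dist_upd[OF jn, of lam ?r "q j"] e2 by simp
    finally show ?case using Suc by simp
  qed
  then have "fin_dist lam p n (Suc k0) \<le> fin_dist lam (mix n) n (Suc k0)" by simp
  moreover have "fin_dist lam (mix n) n = fin_dist lam q n"
    by (rule fin_dist_cong) (simp add: mix_def)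
  ultimately show ?thesis by simp
qed

definition gp :: "real \<Rightarrow> (nat \<Rightarrow> real) \<Rightarrow> bool" where
  "gp lam p \<longleftrightarrow> 0 \<le> lam \<and> pok p \<and> summable p"

lemma fd_lim:
  assumes "gp lam p"
  shows "(\<lambda>n. fin_dist lam p n k) \<longlonglongrightarrow> f k lam p"
proof -
  have l: "0 \<le> lam" and pk: "pok p" and s: "summable p" using assms by (auto simp: gp_def)
  define d where "d n = fin_dist lam p (Suc n) k - fin_dist lam p n k" for n
  have nd: "norm (d n) \<le> p n" for n
  proof -
    have "d n = p n * (sh (fin_dist lam p n) k - fin_dist lam p n k)"
      by (simp add: d_def fin_dist_Suc bern_def algebra_simps)
    moreover have "\<bar>sh (fin_dist lam p n) k - fin_dist lam p n k\<bar> \<le> 1"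
    proof -
      have a1: "0 \<le> sh (fin_dist lam p n) k" "sh (fin_dist lam p n) k \<le> 1"
        using fin_dist_nonneg[OF l pk, of n] fin_dist_le1[OF l pk, of n] by (auto simp: sh_def)
      have a2: "0 \<le> fin_dist lam p n k" "fin_dist lam p n k \<le> 1"
        using fin_dist_nonneg[OF l pk, of n] fin_dist_le1[OF l pk, of n] by auto
      show ?thesis unfolding abs_le_iff using a1 a2 by linarith
    qed
    moreover have "0 \<le> p n" using pk by (simp add: pok_def)
    ultimately show ?thesis by (simp add: abs_mult mult_left_le)
  qed
  have sd: "summable d" by (rule summable_comparison_test'[of p 0]) (use s nd in auto)
  have "(\<lambda>n. fin_dist lam p 0 k + (\<Sum>i<n. d i)) \<longlonglongrightarrow> fin_dist lam p 0 k + suminf d"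
    by (intro tendsto_add tendsto_const summable_LIMSEQ sd)
  moreover have "fin_dist lam p 0 k + (\<Sum>i<n. d i) = fin_dist lam p n k" for n
    unfolding d_def using sum_lessThan_telescope[of "\<lambda>i. fin_dist lam p i k" n] by simp
  ultimately have "convergent (\<lambda>n. fin_dist lam p n k)" by (auto simp: convergent_def)
  then show ?thesis by (simp add: convergent_LIMSEQ_iff f_def)
qed

lemma f_nonneg: "gp lam p \<Longrightarrow> 0 \<le> f k lam p"
  by (rule LIMSEQ_le_const[OF fd_lim]) (auto simp: gp_def intro: fin_dist_nonneg)

lemma f_sum_le: "gp lam p \<Longrightarrow> (\<Sum>k\<le>K. f k lam p) \<le> 1"
proof -
  assume g: "gp lam p"
  have "(\<lambda>n. \<Sum>k\<le>K. fin_dist lam p n k) \<longlonglongrightarrow> (\<Sum>k\<le>K. f k lam p)"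
    by (intro tendsto_sum fd_lim g)
  moreover have "\<forall>n. (\<Sum>k\<le>K. fin_dist lam p n k) \<le> 1"
    using fin_dist_basic g by (auto simp: gp_def)
  ultimately show ?thesis by (intro LIMSEQ_le_const2) auto
qed

lemma tail_bound:
  assumes g: "gp lam p"
  shows "fin_dist lam p n i * (1 - (\<Sum>l. p (l + n))) \<le> f i lam p"
proof -
  have l: "0 \<le> lam" and pk: "pok p" and s: "summable p" using assms by (auto simp: gp_def)
  have pn: "0 \<le> p x" "p x \<le> 1" for x using pk by (auto simp: pok_def)
  let ?c = "fin_dist lam p n i"
  have c0: "0 \<le> ?c" by (rule fin_dist_nonneg[OF l pk])
  have step: "?c * (1 - (\<Sum>l\<in>{n..<N}. p l)) \<le> fin_dist lam p N i" if "n \<le> N" for N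
  using that proof (induction N rule: dec_induct)
    case base then show ?case by simp
  next
    case (step N)
    let ?S = "\<Sum>l\<in>{n..<N}. p l"
    have S0: "0 \<le> ?S" using pn by (simp add: sum_nonneg)
    have "?c * (1 - (\<Sum>l\<in>{n..<Suc N}. p l)) = ?c * (1 - ?S) - p N * ?c"
      using step.hyps by (simp add: algebra_simps)
    also have "\<dots> \<le> (1 - p N) * (?c * (1 - ?S))"
      using c0 S0 pn[of N] by (simp add: algebra_simps)
    also have "\<dots> \<le> (1 - p N) * fin_dist lam p N i"
      using step.IH pn[of N] by (intro mult_left_mono) auto
    also have "\<dots> \<le> fin_dist lam p (Suc N) i"
      using fin_dist_nonneg[OF l pk] pn[of N]
      by (simp add: fin_dist_Suc bern_def sh_def)
    finally show ?case .
  qed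
  have sl: "(\<Sum>l\<in>{n..<N}. p l) \<le> (\<Sum>l. p (l + n))" if "n \<le> N" for N
  proof -
    have "(\<Sum>l\<in>{n..<N}. p l) = (\<Sum>l\<in>{0..<N-n}. p (l + n))"
      using sum.shift_bounds_nat_ivl[of p 0 n "N - n"] that by simp
    also have "\<dots> \<le> (\<Sum>l. p (l + n))"
      by (rule sum_le_suminf) (use s pn in \<open>auto simp: summable_iff_shift\<close>)
    finally show ?thesis .
  qed
  have "\<forall>N\<ge>n. ?c * (1 - (\<Sum>l. p (l + n))) \<le> fin_dist lam p N i"
  proof (intro allI impI)
    fix N assume "n \<le> N"
    have "?c * (1 - (\<Sum>l. p (l + n))) \<le> ?c * (1 - (\<Sum>l\<in>{n..<N}. p l))"
      using sl[OF \<open>n \<le> N\<close>] c0 by (intro mult_left_mono) auto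
    also have "\<dots> \<le> fin_dist lam p N i" by (rule step[OF \<open>n \<le> N\<close>])
    finally show "?c * (1 - (\<Sum>l. p (l + n))) \<le> fin_dist lam p N i" .
  qed
  then show ?thesis by (intro LIMSEQ_le_const[OF fd_lim[OF g]]) auto
qed

lemma tail_small: "gp lam p \<Longrightarrow> \<exists>N. \<forall>n\<ge>N. (\<Sum>l. p (l + n)) < 1"
proof -
  assume g: "gp lam p"
  then have s: "summable p" by (simp add: gp_def)
  obtain N where "\<forall>n\<ge>N. norm (\<Sum>i. p (i + n)) < 1" using suminf_exist_split[OF _ s, of 1] by auto
  show ?thesis
  proof (intro exI allI impI)
    fix n assume "N \<le> n"
    then have "norm (\<Sum>i. p (i + n)) < 1" using \<open>\<forall>n\<ge>N. norm (\<Sum>i. p (i + n)) < 1\<close> by simp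
    then show "(\<Sum>l. p (l + n)) < 1" by (simp add: abs_less_iff)
  qed
qed

lemma good_f: assumes g: "gp lam p" shows "good (\<lambda>k. f k lam p)"
proof -
  have l: "0 \<le> lam" and pk: "pok p" using g by (auto simp: gp_def)
  have p1: "\<forall>i. 0 \<le> f i lam p" using f_nonneg[OF g] by blast
  have p2: "f i lam p * f (Suc (Suc i)) lam p \<le> (f (Suc i) lam p)^2" for i
  proof (rule LIMSEQ_le)
    show "(\<lambda>n. fin_dist lam p n i * fin_dist lam p n (Suc (Suc i))) \<longlonglongrightarrow> f i lam p * f (Suc (Suc i)) lam p"
      by (intro tendsto_mult fd_lim g)
    show "(\<lambda>n. (fin_dist lam p n (Suc i))^2) \<longlonglongrightarrow> (f (Suc i) lam p)^2"
      by (intro tendsto_power fd_lim g)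
    show "\<exists>N. \<forall>n\<ge>N. fin_dist lam p n i * fin_dist lam p n (Suc (Suc i)) \<le> (fin_dist lam p n (Suc i))^2"
      using good_fin_dist[OF l pk] by (simp add: good_def)
  qed
  have p3: "0 < f j lam p" if h: "i \<le> j" "j \<le> ll" "0 < f i lam p" "0 < f ll lam p" for i j ll
  proof -
    have e1: "eventually (\<lambda>n. 0 < fin_dist lam p n i) sequentially"
      by (rule order_tendstoD(1)[OF fd_lim[OF g] h(3)])
    have e2: "eventually (\<lambda>n. 0 < fin_dist lam p n ll) sequentially"
      by (rule order_tendstoD(1)[OF fd_lim[OF g] h(4)])
    obtain N where N: "\<forall>n\<ge>N. (\<Sum>l. p (l + n)) < 1" using tail_small[OF g] by blast
    have e3: "eventually (\<lambda>n. (\<Sum>l. p (l + n)) < 1) sequentially"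
      using N by (auto simp: eventually_sequentially)
    obtain n where n: "0 < fin_dist lam p n i" "0 < fin_dist lam p n ll" "(\<Sum>l. p (l + n)) < 1"
      using eventually_happens'[OF _ eventually_conj[OF e1 eventually_conj[OF e2 e3]]] by auto
    have iv: "\<forall>i j l. i \<le> j \<longrightarrow> j \<le> l \<longrightarrow> 0 < fin_dist lam p n i \<longrightarrow> 0 < fin_dist lam p n l \<longrightarrow> 0 < fin_dist lam p n j"
      using good_fin_dist[OF l pk, of n] by (simp add: good_def)
    have "0 < fin_dist lam p n j"
      using iv[rule_format, of i j ll] h(1,2) n(1,2) by simp
    then have "0 < fin_dist lam p n j * (1 - (\<Sum>l. p (l + n)))" using n(3) by simp
    also have "\<dots> \<le> f j lam p" by (rule tail_bound[OF g])
    finally show ?thesis .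
  qed
  show ?thesis unfolding good_def using p1 p2 p3 by blast
qed

lemma gp_upd: "gp lam p \<Longrightarrow> 0 \<le> q \<Longrightarrow> q \<le> 1 \<Longrightarrow> gp lam (p(j:=q))"
proof -
  assume g: "gp lam p" "0 \<le> q" "q \<le> 1"
  have "summable (p(j:=q))"
  proof (rule summable_comparison_test'[of p "Suc j"])
    show "summable p" using g by (simp add: gp_def)
    fix n assume "Suc j \<le> n"
    then show "norm ((p(j:=q)) n) \<le> p n" using g by (auto simp: gp_def pok_def)
  qed
  then show ?thesis using g by (auto simp: gp_def pok_def)
qed

lemma f_upd:
  assumes g: "gp lam p" and q: "0 \<le> q" "q \<le> 1"
  shows "f k lam (p(j:=q)) = bern q (\<lambda>k. f k lam (p(j:=0))) k"
proof -
  let ?G = "\<lambda>n. fin_dist lam (p(j:=0)) n"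
  have g0: "gp lam (p(j:=0))" by (rule gp_upd[OF g]) auto
  have gq: "gp lam (p(j:=q))" by (rule gp_upd[OF g q])
  have shl: "(\<lambda>n. sh (?G n) k) \<longlonglongrightarrow> sh (\<lambda>k. f k lam (p(j:=0))) k"
  proof (cases k)
    case 0 then show ?thesis by (simp add: sh_def)
  next
    case (Suc k') then show ?thesis by (simp add: sh_def fd_lim[OF g0])
  qed
  have "(\<lambda>n. (1-q) * ?G n k + q * sh (?G n) k) \<longlonglongrightarrow> bern q (\<lambda>k. f k lam (p(j:=0))) k"
    unfolding bern_def by (intro tendsto_add tendsto_mult_left fd_lim[OF g0] shl)
  moreover have "eventually (\<lambda>n. (1-q) * ?G n k + q * sh (?G n) k = fin_dist lam (p(j:=q)) n k) sequentially"
    unfolding eventually_sequentially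
  proof (intro exI allI impI)
    fix n assume "Suc j \<le> n"
    then have jn: "j < n" by simp
    show "(1-q) * ?G n k + q * sh (?G n) k = fin_dist lam (p(j:=q)) n k"
      using fin_dist_upd[OF jn, of lam p q] by (simp add: bern_def)
  qed
  ultimately have "(\<lambda>n. fin_dist lam (p(j:=q)) n k) \<longlonglongrightarrow> bern q (\<lambda>k. f k lam (p(j:=0))) k"
    by (rule Lim_transform_eventually)
  then show ?thesis using LIMSEQ_unique[OF fd_lim[OF gq]] by blast
qed

lemma f_poisson:
  assumes g: "gp a p" and d: "0 \<le> d"
  shows "f k (a + d) p = conv (poi d) (\<lambda>k. f k a p) k"
proof -
  have g2: "gp (a + d) p" using g d by (auto simp: gp_def)
  have "(\<lambda>n. conv (poi d) (fin_dist a p n) k) \<longlonglongrightarrow> conv (poi d) (\<lambda>k. f k a p) k"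
    unfolding conv_def by (intro tendsto_sum tendsto_mult_left fd_lim[OF g])
  then have "(\<lambda>n. fin_dist (a + d) p n k) \<longlonglongrightarrow> conv (poi d) (\<lambda>k. f k a p) k"
    by (simp add: fin_dist_poisson)
  then show ?thesis using LIMSEQ_unique[OF fd_lim[OF g2]] by blast
qed

lemma f_II:
  assumes ge: "gp le pe" and gb: "gp lb pb" and l: "le \<le> lb" and p: "\<forall>x. pe x \<le> pb x"
    and b: "f (Suc k0) lb pb < f k0 lb pb"
  shows "f (Suc k0) le pe \<le> f k0 le pe"
proof -
  have "(\<lambda>n. fin_dist lb pb n k0 - fin_dist lb pb n (Suc k0)) \<longlonglongrightarrow> f k0 lb pb - f (Suc k0) lb pb"
    by (intro tendsto_diff fd_lim gb)
  then have "eventually (\<lambda>n. 0 < fin_dist lb pb n k0 - fin_dist lb pb n (Suc k0)) sequentially"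
    by (rule order_tendstoD(1)) (use b in simp)
  then obtain N where N: "\<forall>n\<ge>N. fin_dist lb pb n (Suc k0) < fin_dist lb pb n k0"
    by (auto simp: eventually_sequentially)
  have bb: "0 \<le> lb" "pok pb" using gb by (auto simp: gp_def)
  have pp: "\<forall>x. 0 \<le> pe x \<and> pe x \<le> pb x \<and> pb x \<le> 1" using ge gb p by (auto simp: gp_def pok_def)
  have le0: "0 \<le> le" using ge by (simp add: gp_def)
  have "\<forall>n\<ge>N. fin_dist le pe n (Suc k0) \<le> fin_dist le pe n k0"
  proof (intro allI impI)
    fix n assume "N \<le> n"
    then have lt: "fin_dist lb pb n (Suc k0) < fin_dist lb pb n k0" using N by simp
    have "0 \<le> fin_dist lb pb n (Suc k0)" by (rule fin_dist_nonneg[OF bb])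
    then have "II k0 (fin_dist lb pb n)" using lt by (simp add: II_def)
    then have "II k0 (fin_dist le pe n)" by (rule II_mono[OF le0 l pp])
    then show "fin_dist le pe n (Suc k0) \<le> fin_dist le pe n k0" by (simp add: II_def)
  qed
  then show ?thesis using LIMSEQ_le[OF fd_lim[OF ge] fd_lim[OF ge]] by blast
qed

lemma f_weak:
  assumes g1: "gp lam p" and g2: "gp lam q" and gb: "gp lb pb" and l: "lam \<le> lb"
    and p: "\<forall>x. p x \<le> q x \<and> q x \<le> pb x"
    and b: "f (Suc k0) lb pb < f k0 lb pb"
  shows "f (Suc k0) lam p \<le> f (Suc k0) lam q"
proof -
  have "(\<lambda>n. fin_dist lb pb n k0 - fin_dist lb pb n (Suc k0)) \<longlonglongrightarrow> f k0 lb pb - f (Suc k0) lb pb"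
    by (intro tendsto_diff fd_lim gb)
  then have "eventually (\<lambda>n. 0 < fin_dist lb pb n k0 - fin_dist lb pb n (Suc k0)) sequentially"
    by (rule order_tendstoD(1)) (use b in simp)
  then obtain N where N: "\<forall>n\<ge>N. fin_dist lb pb n (Suc k0) < fin_dist lb pb n k0"
    by (auto simp: eventually_sequentially)
  have bb: "0 \<le> lb" "pok pb" using gb by (auto simp: gp_def)
  have pp: "\<forall>x. 0 \<le> p x \<and> p x \<le> q x \<and> q x \<le> pb x \<and> pb x \<le> 1"
    using g1 gb p by (auto simp: gp_def pok_def)
  have l0: "0 \<le> lam" using g1 by (simp add: gp_def)
  have "\<forall>n\<ge>N. fin_dist lam p n (Suc k0) \<le> fin_dist lam q n (Suc k0)"
  proof (intro allI impI)
    fix n assume "N \<le> n"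
    then have lt: "fin_dist lb pb n (Suc k0) < fin_dist lb pb n k0" using N by simp
    have "0 \<le> fin_dist lb pb n (Suc k0)" by (rule fin_dist_nonneg[OF bb])
    then have "II k0 (fin_dist lb pb n)" using lt by (simp add: II_def)
    then show "fin_dist lam p n (Suc k0) \<le> fin_dist lam q n (Suc k0)" by (rule fin_mono[OF l0 l pp])
  qed
  then show ?thesis using LIMSEQ_le[OF fd_lim[OF g1] fd_lim[OF g2]] by blast
qed

lemma up_step:
  assumes "pok p" "0 \<le> lam" "0 < fin_dist lam p n i"
  shows "0 < fin_dist lam p (Suc n) i \<or> 0 < fin_dist lam p (Suc n) (Suc i)"
proof (cases "p n < 1")
  case True
  have "0 < (1 - p n) * fin_dist lam p n i" using True assms(3) by simp
  moreover have "0 \<le> p n * sh (fin_dist lam p n) i"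
    using assms fin_dist_nonneg[OF assms(2,1)] by (simp add: pok_def sh_def)
  ultimately have "0 < fin_dist lam p (Suc n) i" by (simp add: fin_dist_Suc bern_def)
  then show ?thesis by simp
next
  case False
  moreover have "p n \<le> 1" using assms(1) by (simp add: pok_def)
  ultimately have "p n = 1" by linarith
  then have "fin_dist lam p (Suc n) (Suc i) = fin_dist lam p n i"
    by (simp add: fin_dist_Suc bern_def sh_def)
  then show ?thesis using assms(3) by simp
qed

lemma pos_fin:
  assumes g: "gp lam p" and h: "0 < lam \<or> (\<forall>l<k. 0 < p l)"
  shows "\<exists>n0. \<forall>n\<ge>n0. \<exists>i\<ge>k. 0 < fin_dist lam p n i"
proof -
  have l: "0 \<le> lam" and pk: "pok p" using g by (auto simp: gp_def)
  have "\<exists>n0. \<exists>i\<ge>k. 0 < fin_dist lam p n0 i"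
  proof (cases "0 < lam")
    case True
    then have "0 < fin_dist lam p 0 k" by (simp add: fin_dist_0 poi_def)
    then show ?thesis by blast
  next
    case False
    then have pl: "\<forall>l<k. 0 < p l" using h by simp
    have "n \<le> k \<Longrightarrow> \<exists>i\<ge>n. 0 < fin_dist lam p n i" for n
    proof (induction n)
      case 0
      have "0 < fin_dist lam p 0 0" by (simp add: fin_dist_0 poi_def)
      then show ?case by blast
    next
      case (Suc n)
      then obtain i where i: "i \<ge> n" "0 < fin_dist lam p n i" by auto
      have pn: "0 < p n" using pl Suc.prems by simp
      have "0 \<le> (1 - p n) * fin_dist lam p n (Suc i)"
        using pk fin_dist_nonneg[OF l pk] by (simp add: pok_def)
      moreover have "0 < p n * fin_dist lam p n i" using pn i by simp
      ultimately have "0 < fin_dist lam p (Suc n) (Suc i)"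
        by (simp add: fin_dist_Suc bern_def sh_def)
      then show ?case using i(1) by (intro exI[of _ "Suc i"]) simp
    qed
    then show ?thesis by blast
  qed
  then obtain n0 where n0: "\<exists>i\<ge>k. 0 < fin_dist lam p n0 i" by blast
  have "\<exists>i\<ge>k. 0 < fin_dist lam p n i" if "n0 \<le> n" for n
  using that proof (induction n rule: dec_induct)
    case base then show ?case using n0 .
  next
    case (step n)
    then obtain i where i: "i \<ge> k" "0 < fin_dist lam p n i" by blast
    from up_step[OF pk l i(2)] show ?case
    proof
      assume "0 < fin_dist lam p (Suc n) i" then show ?thesis using i(1) by blast
    next
      assume "0 < fin_dist lam p (Suc n) (Suc i)" then show ?thesis using i(1) le_SucI by blast
    qed
  qed
  then show ?thesis by blast
qed

lemma f_pos_ex: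
  assumes g: "gp lam p" and h: "0 < lam \<or> (\<forall>l<k. 0 < p l)"
  shows "\<exists>i\<ge>k. 0 < f i lam p"
proof -
  obtain n0 where n0: "\<forall>n\<ge>n0. \<exists>i\<ge>k. 0 < fin_dist lam p n i" using pos_fin[OF g h] by blast
  obtain N where N: "\<forall>n\<ge>N. (\<Sum>l. p (l + n)) < 1" using tail_small[OF g] by blast
  let ?n = "max n0 N"
  have "\<exists>i\<ge>k. 0 < fin_dist lam p ?n i" using n0 by simp
  then obtain i where i: "i \<ge> k" "0 < fin_dist lam p ?n i" by blast
  have t: "(\<Sum>l. p (l + ?n)) < 1" using N by simp
  have "0 < fin_dist lam p ?n i * (1 - (\<Sum>l. p (l + ?n)))" using i(2) t by simp
  also have "\<dots> \<le> f i lam p" by (rule tail_bound[OF g])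
  finally show ?thesis using i(1) by blast
qed

definition PM :: "(nat \<Rightarrow> real) \<Rightarrow> nat \<Rightarrow> bool" where
  "PM B m \<longleftrightarrow> (if m = 0 then 0 else B (m - 1)) \<le> B m \<and> B m > B (Suc m)"

lemma mode_unique:
  assumes g: "good B" and s: "\<forall>K. (\<Sum>k\<le>K. B k) \<le> 1" and p: "0 < B i0"
  shows "\<exists>!m. PM B m"
proof -
  have nn: "\<forall>i. 0 \<le> B i" and iv: "\<forall>i j l. i \<le> j \<longrightarrow> j \<le> l \<longrightarrow> 0 < B i \<longrightarrow> 0 < B l \<longrightarrow> 0 < B j"
    using g by (auto simp: good_def)
  have ex: "\<exists>j. B (Suc j) < B j"
  proof (rule ccontr)
    assume "\<not> ?thesis"
    then have inc: "\<forall>j. B j \<le> B (Suc j)" by (simp add: not_less)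
    have ge: "B i0 \<le> B j" if "i0 \<le> j" for j
      using that proof (induction j rule: dec_induct)
      case base then show ?case by simp
    next
      case (step n) then show ?case using inc order_trans by blast
    qed
    obtain K where K: "1 < of_nat K * B i0" using ex_less_of_nat_mult[OF p] by blast
    have "of_nat K * B i0 \<le> (\<Sum>k\<in>{i0..<i0+K}. B i0)" by simp
    also have "\<dots> \<le> (\<Sum>k\<in>{i0..<i0+K}. B k)" by (rule sum_mono) (use ge in auto)
    also have "\<dots> \<le> (\<Sum>k\<le>i0+K. B k)" by (rule sum_mono2) (use nn in auto)
    also have "\<dots> \<le> 1" using s by blast
    finally show False using K by simp
  qed
  define m0 where "m0 = (LEAST j. B (Suc j) < B j)"
  have m1: "B (Suc m0) < B m0" unfolding m0_def by (rule LeastI_ex[OF ex])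
  have m2: "(if m0 = 0 then 0 else B (m0 - 1)) \<le> B m0"
  proof (cases "m0 = 0")
    case True then show ?thesis using nn by simp
  next
    case False
    then have "m0 - 1 < m0" by simp
    then have "\<not> B (Suc (m0 - 1)) < B (m0 - 1)" unfolding m0_def by (rule not_less_Least)
    then show ?thesis using False by simp
  qed
  have PM0: "PM B m0" using m1 m2 by (simp add: PM_def)
  have uniq: "\<not> (PM B a \<and> PM B b)" if ab: "a < b" for a b
  proof
    assume h: "PM B a \<and> PM B b"
    have pa: "0 < B a" using h nn[rule_format, of "Suc a"] by (simp add: PM_def)
    have pb: "0 < B b" using h nn[rule_format, of "Suc b"] by (simp add: PM_def)
    have pos: "\<forall>j. a \<le> j \<longrightarrow> j \<le> b \<longrightarrow> 0 < B j" using iv pa pb by blast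
    have "B (Suc (b - 1)) < B (b - 1)"
      by (rule good_decr[OF g _ pos]) (use h ab in \<open>auto simp: PM_def\<close>)
    moreover have "B (b - 1) \<le> B b" using h ab by (simp add: PM_def)
    ultimately show False using ab by simp
  qed
  show ?thesis
  proof (rule ex1I[of _ m0])
    show "PM B m0" by (rule PM0)
    fix m assume "PM B m"
    show "m = m0"
    proof (rule ccontr)
      assume "m \<noteq> m0"
      then have "m < m0 \<or> m0 < m" by arith
      then show False using uniq \<open>PM B m\<close> PM0 by blast
    qed
  qed
qed

lemma poi_deriv: "((\<lambda>x. poi x i) has_real_derivative (sh (poi x) i - poi x i)) (at x)"
proof -
  have "((\<lambda>x. exp (- x) * x ^ i / fact i) has_real_derivative
        ((- exp (- x)) * x ^ i / fact i + exp (- x) * (of_nat i * x ^ (i - 1)) / fact i)) (at x)"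
    by (auto intro!: derivative_eq_intros simp: field_simps)
  moreover have "(- exp (- x)) * x ^ i / fact i + exp (- x) * (of_nat i * x ^ (i - 1)) / fact i
      = sh (poi x) i - poi x i"
  proof (cases i)
    case 0 then show ?thesis by (simp add: poi_def sh_def)
  next
    case (Suc i')
    have "exp (- x) * (of_nat (Suc i') * x ^ i') / fact (Suc i') = exp (- x) * x ^ i' / fact i'"
      by (simp add: field_simps del: of_nat_Suc)
    then show ?thesis using Suc by (simp add: poi_def sh_def)
  qed
  ultimately show ?thesis unfolding poi_def by (rule DERIV_cong)
qed

lemma conv_sh_left: "conv (sh z) A k = sh (conv z A) k"
proof (cases k)
  case 0 then show ?thesis by (simp add: conv_def sh_def)
next
  case (Suc k')
  have "conv (sh z) A (Suc k') = sh z 0 * A (Suc k') + (\<Sum>i\<le>k'. sh z (Suc i) * A (Suc k' - Suc i))"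
    unfolding conv_def sum.atMost_Suc_shift by simp
  also have "\<dots> = (\<Sum>i\<le>k'. z i * A (k' - i))" by (simp add: sh_def)
  finally show ?thesis using Suc by (simp add: sh_def conv_def)
qed

lemma phi_deriv:
  "((\<lambda>x. conv (poi x) B k) has_real_derivative (sh (conv (poi x) B) k - conv (poi x) B k)) (at x)"
proof -
  have "((\<lambda>x. \<Sum>i\<le>k. poi x i * B (k - i)) has_real_derivative
          (\<Sum>i\<le>k. (sh (poi x) i - poi x i) * B (k - i))) (at x)"
    by (rule DERIV_sum) (intro DERIV_cmult_right poi_deriv)
  moreover have "(\<Sum>i\<le>k. (sh (poi x) i - poi x i) * B (k - i)) = sh (conv (poi x) B) k - conv (poi x) B k"
    using conv_sh_left[of "poi x" B k] by (simp add: conv_def algebra_simps sum_subtractf)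
  ultimately show ?thesis unfolding conv_def by simp
qed

lemma nabla_gp: "in_nabla lam p \<Longrightarrow> gp lam p"
proof -
  assume h: "in_nabla lam p"
  have "p i \<le> p 0" for i using h lift_Suc_antimono_le[of p 0 i] by (simp add: in_nabla_def)
  then show ?thesis using h by (auto simp: in_nabla_def gp_def pok_def intro: order_trans)
qed

theorem lemma2:
  fixes lam lam' :: real and p p' :: "nat \<Rightarrow> real" and k :: nat
  assumes "in_nabla lam p" and "in_nabla lam' p'"
    and "(lam, p) \<noteq> (lam', p')"
    and "lam \<le> lam'" and "\<forall>i. p i \<le> p' i"
    and "k > lead_mode lam' p'"
    and "lam' + p' (k - 1) > 0"
  shows "f k lam' p' > f k lam p"
proof -
  note nab = assms(1,2) and ne = assms(3) and ll = assms(4) and pp = assms(5)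
    and km = assms(6) and kpos = assms(7)
  have g: "gp lam p" and g': "gp lam' p'" using nab nabla_gp by auto
  let ?B = "\<lambda>k. f k lam' p'"
  have gB: "good ?B" by (rule good_f[OF g'])
  have nnB: "\<forall>i. 0 \<le> ?B i" using gB by (simp add: good_def)
  have ivB: "\<forall>i j l. i \<le> j \<longrightarrow> j \<le> l \<longrightarrow> 0 < ?B i \<longrightarrow> 0 < ?B l \<longrightarrow> 0 < ?B j"
    using gB by (simp add: good_def)
  have hpos: "0 < lam' \<or> (\<forall>l<k. 0 < p' l)"
  proof (cases "0 < lam'")
    case True then show ?thesis by simp
  next
    case False
    then have "lam' = 0" using g' by (simp add: gp_def)
    then have pk: "0 < p' (k - 1)" using kpos by simp
    have "\<forall>l<k. 0 < p' l"
    proof (intro allI impI)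
      fix l assume "l < k"
      then have "p' (k - 1) \<le> p' l"
        using nab(2) lift_Suc_antimono_le[of p' l "k - 1"] by (simp add: in_nabla_def)
      then show "0 < p' l" using pk by simp
    qed
    then show ?thesis by simp
  qed
  obtain i0 where i0: "i0 \<ge> k" "0 < ?B i0" using f_pos_ex[OF g' hpos] by blast
  have sB: "\<forall>K. (\<Sum>k\<le>K. ?B k) \<le> 1" using f_sum_le[OF g'] by blast
  have ex1: "\<exists>!m. PM ?B m" by (rule mode_unique[OF gB sB i0(2)])
  define m where "m = lead_mode lam' p'"
  have Pm: "PM ?B m"
  proof -
    have "lead_mode lam' p' = (THE m. PM ?B m)" by (simp add: lead_mode_def PM_def)
    then show ?thesis using theI'[OF ex1] m_def by simp
  qed
  have mk: "m < k" using km m_def by simp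
  have Bm: "0 < ?B m" using Pm nnB[rule_format, of "Suc m"] by (simp add: PM_def)
  have posB: "\<forall>j. m \<le> j \<longrightarrow> j \<le> k \<longrightarrow> 0 < ?B j"
  proof (intro allI impI)
    fix j assume j: "m \<le> j" "j \<le> k"
    then have "j \<le> i0" using i0(1) by simp
    then show "0 < ?B j" using ivB[rule_format, of m j i0] Bm i0(2) j(1) by blast
  qed
  obtain k0 where k0: "k = Suc k0" using mk by (cases k) auto
  have Bdec: "?B (Suc k0) < ?B k0"
    using good_decr[OF gB _ posB, of k0] Pm mk k0 by (simp add: PM_def)
  have Bk: "0 < ?B (Suc k0)" using posB mk k0 by simp
  have pp': "\<forall>x. p x \<le> p' x \<and> p' x \<le> p' x" using pp by simp
  show ?thesis
  proof (cases "lam < lam'")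
    case True
    have gp': "gp lam p'" using g g' by (simp add: gp_def)
    have w: "f (Suc k0) lam p \<le> f (Suc k0) lam p'"
      by (rule f_weak[OF g gp' g' ll pp' Bdec])
    define B0 where "B0 = (\<lambda>k. f k 0 p')"
    have g0: "gp 0 p'" using g' by (simp add: gp_def)
    have fx: "f j x p' = conv (poi x) B0 j" if "0 \<le> x" for j x
      using f_poisson[OF g0 that, of j] by (simp add: B0_def)
    define phi where "phi x = conv (poi x) B0 (Suc k0)" for x
    have "\<exists>z>lam. z < lam' \<and> phi lam' - phi lam = (lam' - lam) * (sh (conv (poi z) B0) (Suc k0) - conv (poi z) B0 (Suc k0))"
      unfolding phi_def by (rule MVT2[OF True]) (rule phi_deriv)
    then obtain z where z: "lam < z" "z < lam'"
      and mvt: "phi lam' - phi lam = (lam' - lam) * (conv (poi z) B0 k0 - conv (poi z) B0 (Suc k0))"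
      by (auto simp: sh_def)
    have l0: "0 \<le> lam" using g by (simp add: gp_def)
    have z0: "0 < z" using z l0 by simp
    have gz: "gp z p'" using g' z0 by (simp add: gp_def)
    let ?c = "\<lambda>j. f j z p'"
    have cz: "?c j = conv (poi z) B0 j" for j using fx z0 by simp
    have cw: "?c (Suc k0) \<le> ?c k0"
      by (rule f_II[OF gz g' _ _ Bdec]) (use z in auto)
    have nnB0: "\<forall>i. 0 \<le> B0 i" using f_nonneg[OF g0] by (simp add: B0_def)
    have ck0: "0 < ?c k0"
    proof -
      have "0 < ?B k0" using Bdec Bk by simp
      then have "0 < conv (poi lam') B0 k0" using fx g' by (simp add: gp_def)
      have "\<exists>i\<in>{..k0}. poi lam' i * B0 (k0 - i) \<noteq> 0"
      proof (rule ccontr)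
        assume "\<not> ?thesis"
        then have "conv (poi lam') B0 k0 = 0" unfolding conv_def by (intro sum.neutral) blast
        then show False using \<open>0 < conv (poi lam') B0 k0\<close> by simp
      qed
      then obtain i where i: "i \<le> k0" "poi lam' i * B0 (k0 - i) \<noteq> 0" by auto
      have "B0 (k0 - i) \<noteq> 0" using i(2) by auto
      then have "0 < B0 (k0 - i)" using nnB0[rule_format, of "k0 - i"] by linarith
      moreover have "0 < poi z i" using z0 by (simp add: poi_def)
      ultimately have "0 < poi z i * B0 (k0 - i)" by simp
      also have "\<dots> \<le> conv (poi z) B0 k0"
        unfolding conv_def by (rule member_le_sum) (use i z0 nnB0 poi_nonneg in auto)
      finally show ?thesis using cz by simp
    qed
    have cs: "?c (Suc k0) < ?c k0"
    proof (rule ccontr)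
      assume "\<not> ?thesis"
      then have eq: "?c k0 \<le> ?c (Suc k0)" by simp
      have gc: "good ?c" by (rule good_f[OF gz])
      have shc: "sh ?c (Suc k0) \<le> ?c (Suc k0)" using eq by (simp add: sh_def)
      have cpos: "0 < ?c (Suc k0)" using eq ck0 by simp
      have nd: "\<forall>j\<le>Suc k0. 0 \<le> ?c j - sh ?c j" using good_nd[OF gc shc cpos] by simp
      let ?zz = "poi (lam' - z)"
      have gB2: "?B j = conv ?zz ?c j" for j
        using f_poisson[OF gz, of "lam' - z" j] z by simp
      have "?zz 0 * (?c (Suc k0) - sh ?c (Suc k0)) \<le> conv ?zz (\<lambda>j. ?c j - sh ?c j) (Suc k0)"
        by (rule conv_ge[OF _ nd]) (use z in \<open>simp add: poi_nonneg\<close>)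
      also have "\<dots> = ?B (Suc k0) - ?B k0"
        unfolding conv_diff gB2 conv_sh by (simp add: sh_def)
      finally have "?zz 0 * (?c (Suc k0) - ?c k0) \<le> ?B (Suc k0) - ?B k0" by (simp add: sh_def)
      moreover have "0 \<le> ?zz 0 * (?c (Suc k0) - ?c k0)" using eq z by (simp add: poi_def)
      ultimately show False using Bdec by linarith
    qed
    have "0 < phi lam' - phi lam"
      unfolding mvt using cs cz True by simp
    moreover have "phi lam' = f (Suc k0) lam' p'" using fx g' by (simp add: phi_def gp_def)
    moreover have "phi lam = f (Suc k0) lam p'" using fx l0 by (simp add: phi_def)
    ultimately show ?thesis using w k0 by simp
  next
    case False
    then have leq: "lam = lam'" using ll by simp
    then have "p \<noteq> p'" using ne by simp
    then obtain j where "p j \<noteq> p' j" by auto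
    then have pj: "p j < p' j" using pp[rule_format, of j] by simp
    have pk': "pok p'" and pk: "pok p" using g g' by (auto simp: gp_def)
    have pj0: "0 \<le> p j" "p' j \<le> 1" using pk pk' by (auto simp: pok_def)
    let ?p2 = "p'(j := p j)"
    have g2: "gp lam ?p2" using gp_upd[OF g' pj0(1)] pj pj0 leq by simp
    have pp2: "\<forall>x. p x \<le> ?p2 x \<and> ?p2 x \<le> p' x" using pp pj by auto
    have w: "f (Suc k0) lam p \<le> f (Suc k0) lam ?p2"
      by (rule f_weak[OF g g2 g' ll pp2 Bdec])
    let ?G = "\<lambda>k. f k lam' (p'(j:=0))"
    have gG0: "gp lam' (p'(j:=0))" by (rule gp_upd[OF g']) auto
    have e1: "?B k = bern (p' j) ?G k" for k
      using f_upd[OF g', of "p' j" k j] pj0 pj by simp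
    have e2: "f k lam' ?p2 = bern (p j) ?G k" for k
      using f_upd[OF g', of "p j" k j] pj0 pj by simp
    have Gw: "?G (Suc k0) \<le> ?G k0"
      by (rule f_II[OF gG0 g' _ _ Bdec]) (use pk' in \<open>auto simp: pok_def\<close>)
    have Gs: "?G (Suc k0) < ?G k0"
    proof (rule ccontr)
      assume "\<not> ?thesis"
      then have eq: "?G (Suc k0) = ?G k0" using Gw by simp
      have b1: "?B (Suc k0) = ?G (Suc k0)"
        using e1[of "Suc k0"] eq by (simp add: bern_def sh_def algebra_simps)
      have gpos: "0 < ?G k0" using b1 Bk eq by simp
      have gG: "good ?G" by (rule good_f[OF gG0])
      have shG: "sh ?G k0 \<le> ?G k0"
      proof (cases k0)
        case 0 then show ?thesis using gG by (simp add: sh_def good_def)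
      next
        case (Suc k1)
        have "?G k1 * ?G (Suc k0) \<le> (?G k0)^2" using gG Suc by (simp add: good_def)
        then have "?G k1 * ?G k0 \<le> ?G k0 * ?G k0" using eq by (simp add: power2_eq_square)
        then have "?G k1 \<le> ?G k0" using gpos by simp
        then show ?thesis using Suc by (simp add: sh_def)
      qed
      have "?B k0 = (1 - p' j) * ?G k0 + p' j * sh ?G k0" using e1[of k0] by (simp add: bern_def)
      also have "\<dots> \<le> (1 - p' j) * ?G k0 + p' j * ?G k0"
        using shG pj pj0 by (intro add_left_mono mult_left_mono) auto
      also have "\<dots> = ?B (Suc k0)" using b1 eq by (simp add: algebra_simps)
      finally show False using Bdec by simp
    qed
    have "f (Suc k0) lam' p' - f (Suc k0) lam' ?p2 = (p' j - p j) * (?G k0 - ?G (Suc k0))"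
      using e1[of "Suc k0"] e2[of "Suc k0"] by (simp add: bern_def sh_def algebra_simps)
    moreover have "0 < (p' j - p j) * (?G k0 - ?G (Suc k0))" using pj Gs by simp
    ultimately show ?thesis using w k0 leq by simp
  qed
qed

end
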